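(* Let $q\ge 4$. If a hyperplane $H$ of $\mathrm{PG}(U_1)$ contains a twisted cubic of $\mathcal O_1$ (i.e. contains $\theta(L)$ for some $q$-order subline $L$ of $\mathrm{PG}(1,q^3)$), then $|H\cap\mathcal O_1|\in\{q^2+1,\;q^2+q+1\}$.
   Context: $q$ is a prime power. Let $U_1\subset\mathbb F_{q^3}^8$ be the set of vectors $(a,b^{q^2},b^{q},c,b,c^{q},c^{q^2},d)$ with $a,d\in\mathbb F_q$, $b,c\in\mathbb F_{q^3}$; it is an $8$-dimensional $\mathbb F_q$-vector space, so $\mathrm{PG}(U_1)\cong\mathrm{PG}(7,q)$. For $(a,b,c,d)\ne 0$ let $P(a,b,c,d)$ be the point of $\mathrm{PG}(U_1)$ spanned by this vector. Let $\mathcal O_1=\{P(1,t,t^{q^2+q},t^{q^2+q+1}) : t\in\mathbb F_{q^3}\}\cup\{P(0,0,0,1)\}$. Let $\theta:\mathrm{PG}(1,q^3)\to\mathcal O_1$ be the bijection $\langle(1,t)\rangle\mapsto P(1,t,t^{q^2+q},t^{q^2+q+1})$, $\langle(0,1)\rangle\mapsto P(0,0,0,1)$. A $q$-order subline of $\mathrm{PG}(1,q^3)$ is the image of $\mathrm{PG}(1,q)=\{\langle(1,t)\rangle:t\in\mathbb F_q\}\cup\{\langle(0,1)\rangle\}$ under an element of $\mathrm{PGL}(2,q^3)$; the sets $\theta(L)$ are twisted cubics, called the twisted cubics of $\mathcal O_1$. *)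

theory Defs
  imports "HOL-Computational_Algebra.Primes"
begin

text \<open>The ambient field is a finite field 'a of order q^3 (F_{q^3}); F_q is its subfield
  {x. x^q = x}. Vectors of F_{q^3}^8 are functions nat => 'a supported on {0..<8}.\<close>

definition Fq :: "nat \<Rightarrow> 'a::{field,finite} set" where
  "Fq q = {x. x ^ q = x}"

definition vec8 :: "'a::zero list \<Rightarrow> nat \<Rightarrow> 'a" where
  "vec8 xs i = (if i < length xs then xs ! i else 0)"

definition U1vec :: "nat \<Rightarrow> 'a::{field,finite} \<Rightarrow> 'a \<Rightarrow> 'a \<Rightarrow> 'a \<Rightarrow> nat \<Rightarrow> 'a" where
  "U1vec q a b c d = vec8 [a, b ^ (q^2), b ^ q, c, b, c ^ q, c ^ (q^2), d]"

definition U1 :: "nat \<Rightarrow> (nat \<Rightarrow> 'a::{field,finite}) set" where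
  "U1 q = {U1vec q a b c d | a b c d. a \<in> Fq q \<and> d \<in> Fq q}"

definition fq_subspace :: "nat \<Rightarrow> (nat \<Rightarrow> 'a::{field,finite}) set \<Rightarrow> bool" where
  "fq_subspace q S \<longleftrightarrow> (\<lambda>i. 0) \<in> S \<and> (\<forall>x\<in>S. \<forall>y\<in>S. (\<lambda>i. x i + y i) \<in> S)
     \<and> (\<forall>l\<in>Fq q. \<forall>x\<in>S. (\<lambda>i. l * x i) \<in> S)"

definition hyperplane :: "nat \<Rightarrow> (nat \<Rightarrow> 'a::{field,finite}) set \<Rightarrow> bool" where
  "hyperplane q H \<longleftrightarrow> fq_subspace q H \<and> H \<subseteq> U1 q \<and> H \<noteq> U1 q \<and>
     (\<forall>v\<in>U1 q - H. \<forall>u\<in>U1 q. \<exists>h\<in>H. \<exists>l\<in>Fq q. u = (\<lambda>i. h i + l * v i))"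

definition pt :: "nat \<Rightarrow> (nat \<Rightarrow> 'a::{field,finite}) \<Rightarrow> (nat \<Rightarrow> 'a) set" where
  "pt q v = {(\<lambda>i. l * v i) | l. l \<in> Fq q}"

text \<open>Points of PG(1,q^3): Some t = <(1,t)>, None = <(0,1)>.\<close>
definition theta :: "nat \<Rightarrow> 'a::{field,finite} option \<Rightarrow> (nat \<Rightarrow> 'a) set" where
  "theta q x = (case x of
      Some t \<Rightarrow> pt q (U1vec q 1 t (t ^ (q^2 + q)) (t ^ (q^2 + q + 1)))
    | None \<Rightarrow> pt q (U1vec q 0 0 0 1))"

definition O1 :: "nat \<Rightarrow> (nat \<Rightarrow> 'a::{field,finite}) set set" where
  "O1 q = range (theta q)"

text \<open>Action of the matrix [[al,be],[ga,de]] on PG(1,q^3): <(x,y)> maps to <(al x + be y, ga x + de y)>.\<close>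
definition mob :: "'a::field \<Rightarrow> 'a \<Rightarrow> 'a \<Rightarrow> 'a \<Rightarrow> 'a option \<Rightarrow> 'a option" where
  "mob al be ga de x = (case x of
      Some t \<Rightarrow> (if al + be * t = 0 then None else Some ((ga + de * t) / (al + be * t)))
    | None \<Rightarrow> (if be = 0 then None else Some (de / be)))"

definition PG1q :: "nat \<Rightarrow> 'a::{field,finite} option set" where
  "PG1q q = Some ` Fq q \<union> {None}"

definition subline :: "nat \<Rightarrow> 'a::{field,finite} option set \<Rightarrow> bool" where
  "subline q L \<longleftrightarrow> (\<exists>al be ga de. al * de - be * ga \<noteq> 0 \<and> L = mob al be ga de ` PG1q q)"

end

theory Submission
  imports Defs "HOL-Number_Theory.Residues" "HOL-Computational_Algebra.Polynomial"
begin

locale ffq =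
  fixes q :: nat and ty :: "'a::{field,finite} itself"
  assumes qpp: "\<exists>p k. prime p \<and> k > 0 \<and> q = p ^ k"
    and q4: "q \<ge> 4"
    and cardF: "card (UNIV :: 'a set) = q ^ 3"
begin

lemma frob_add: "((x::'a) + y) ^ q = x ^ q + y ^ q"
proof -
  obtain p k where pk: "prime p" "k > 0" "q = p ^ k" using qpp by blast
  have c0: "CHAR('a) > 0" by (simp add: finite_imp_CHAR_pos)
  have cp: "prime CHAR('a)" using prime_CHAR_semidom[OF c0] .
  have "CHAR('a) dvd p ^ (k*3)" using CHAR_dvd_CARD[where 'a='a] cardF pk by (simp add: power_mult)
  hence "CHAR('a) dvd p" using cp prime_dvd_power by blast
  hence "CHAR('a) = p" using cp pk(1) unfolding prime_nat_iff by (metis less_irrefl)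
  thus ?thesis using pk freshmans_dream'[OF cp, of q k] by simp
qed

lemma q_pos: "q > 0" using q4 by simp

lemma frob_mult: "((x::'a) * y) ^ q = x ^ q * y ^ q" by (simp add: power_mult_distrib)

lemma frob_neg: "(- (x::'a)) ^ q = - (x ^ q)"
proof -
  have "(- x) ^ q + x ^ q = 0" using frob_add[of "-x" x] q_pos by (simp add: power_0_left)
  thus ?thesis by (simp add: eq_neg_iff_add_eq_0)
qed

lemma frob_diff: "((x::'a) - y) ^ q = x ^ q - y ^ q"
  using frob_add[of x "-y"] frob_neg[of y] by simp

lemma pow_card: "(x::'a) ^ (q^3) = x"
proof (cases "x = 0")
  case False
  have "x * (\<Prod>y\<in>UNIV-{0}. x * y) = x * x ^ (card (UNIV :: 'a set) - 1) * \<Prod>(UNIV-{0})"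
    by (simp add: prod.distrib mult_ac)
  also have "x * x ^ (card (UNIV :: 'a set) - 1) = x ^ Suc (card (UNIV :: 'a set) - 1)"
    by (subst power_Suc) auto
  also have "Suc (card (UNIV :: 'a set) - 1) = card (UNIV :: 'a set)"
    using finite_UNIV_card_ge_0[where ?'a = 'a] by simp
  also have "(\<Prod>y\<in>UNIV-{0}. x * y) = (\<Prod>y\<in>UNIV-{0}. y)"
    by (rule prod.reindex_bij_witness[of _ "\<lambda>y. y / x" "\<lambda>y. x * y"]) (use False in auto)
  finally show ?thesis
    using cardF by simp
qed (use q_pos in auto)

lemma pow_q2q: "((x::'a) ^ (q^2)) ^ q = x"
  using pow_card[of x] by (simp add: power_mult[symmetric] power2_eq_square power3_eq_cube)

lemma pow_qq2: "((x::'a) ^ q) ^ (q^2) = x"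
  using pow_card[of x] by (simp add: power_mult[symmetric] power2_eq_square power3_eq_cube mult.commute)

lemma pow_qq: "((x::'a) ^ q) ^ q = x ^ (q^2)"
  by (simp add: power_mult[symmetric] power2_eq_square)

lemma pow_q2q2: "((x::'a) ^ (q^2)) ^ (q^2) = x ^ q"
proof -
  have "((x::'a) ^ (q^2)) ^ (q^2) = ((x ^ (q^2)) ^ q) ^ q" by (simp add: pow_qq)
  thus ?thesis by (simp add: pow_q2q)
qed

lemma frob2_add: "((x::'a) + y) ^ (q^2) = x ^ (q^2) + y ^ (q^2)"
  by (simp add: pow_qq[symmetric] frob_add)
lemma frob2_diff: "((x::'a) - y) ^ (q^2) = x ^ (q^2) - y ^ (q^2)"
  by (simp add: pow_qq[symmetric] frob_diff)
lemma frob2_neg: "(- (x::'a)) ^ (q^2) = - (x ^ (q^2))"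
  by (simp add: pow_qq[symmetric] frob_neg)

lemma Fq_iff: "x \<in> Fq q \<longleftrightarrow> (x::'a) ^ q = x" by (simp add: Fq_def)

lemma Fq_0[simp]: "(0::'a) \<in> Fq q" using q_pos by (simp add: Fq_def)
lemma Fq_1[simp]: "(1::'a) \<in> Fq q" by (simp add: Fq_def)
lemma Fq_add: "x \<in> Fq q \<Longrightarrow> y \<in> Fq q \<Longrightarrow> (x::'a) + y \<in> Fq q" by (simp add: Fq_def frob_add)
lemma Fq_diff: "x \<in> Fq q \<Longrightarrow> y \<in> Fq q \<Longrightarrow> (x::'a) - y \<in> Fq q" by (simp add: Fq_def frob_diff)
lemma Fq_neg: "x \<in> Fq q \<Longrightarrow> - (x::'a) \<in> Fq q" by (simp add: Fq_def frob_neg)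
lemma Fq_mult: "x \<in> Fq q \<Longrightarrow> y \<in> Fq q \<Longrightarrow> (x::'a) * y \<in> Fq q" by (simp add: Fq_def power_mult_distrib)
lemma Fq_div: "x \<in> Fq q \<Longrightarrow> y \<in> Fq q \<Longrightarrow> (x::'a) / y \<in> Fq q" by (simp add: Fq_def power_divide)
lemma Fq_pow2: "x \<in> Fq q \<Longrightarrow> (x::'a) ^ (q^2) = x" by (simp add: Fq_def pow_qq[symmetric])


lemma card_Fq_le: "card (Fq q :: 'a set) \<le> q"
proof -
  let ?P = "monom (1::'a) q - monom 1 1"
  have q1: "q > 1" using q4 by simp
  have c: "coeff ?P q = 1" using q1 by (simp add: coeff_pCons split: nat.splits)
  have nz: "?P \<noteq> 0"
  proof
    assume h: "?P = 0"
    have "coeff ?P q = 0" unfolding h by (rule coeff_0)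
    with c show False by (metis zero_neq_one)
  qed
  have "Fq q = {x. poly ?P x = 0}" by (auto simp: Fq_def poly_monom)
  hence "card (Fq q :: 'a set) \<le> degree ?P" using card_poly_roots_bound[OF nz] by simp
  also have "degree ?P \<le> q"
  proof -
    have d3: "degree (monom (1::'a) 1) \<le> q" using degree_monom_le[of "1::'a" 1] q1 by linarith
    show ?thesis by (intro degree_diff_le degree_monom_le d3)
  qed
  finally show ?thesis .
qed

definition Tr :: "'a \<Rightarrow> 'a" where "Tr x = x + x ^ q + x ^ (q^2)"

lemma Tr_Fq: "Tr x \<in> Fq q"
  by (simp add: Tr_def Fq_iff frob_add pow_qq pow_q2q add_ac)

lemma card_kerTr: "card {x. Tr x = 0} \<le> q^2"
proof -
  let ?P = "monom (1::'a) (q^2) + monom 1 q + monom 1 1"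
  have q1: "q > 1" using q4 by simp
  have qq: "q^2 > q" using q1 by (simp add: power2_eq_square)
  have qq2: "q \<noteq> q^2" "Suc 0 \<noteq> q^2" using qq q1 by auto
  have c: "coeff ?P (q^2) = 1" using qq2 by (simp add: coeff_pCons split: nat.splits)
  have nz: "?P \<noteq> 0"
  proof
    assume h: "?P = 0"
    have "coeff ?P (q^2) = 0" unfolding h by (rule coeff_0)
    with c show False by (metis zero_neq_one)
  qed
  have "{x. Tr x = 0} = {x. poly ?P x = 0}" by (auto simp: Tr_def poly_monom add_ac)
  hence "card {x. Tr x = 0} \<le> degree ?P" using card_poly_roots_bound[OF nz] by simp
  also have "degree ?P \<le> q^2"
  proof -
    have d2: "degree (monom (1::'a) q) \<le> q^2" using degree_monom_le[of "1::'a" q] qq by linarith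
    have d3: "degree (monom (1::'a) 1) \<le> q^2" using degree_monom_le[of "1::'a" 1] qq q1 by linarith
    show ?thesis by (intro degree_add_le degree_monom_le d2 d3)
  qed
  finally show ?thesis .
qed

lemma card_Fq: "card (Fq q :: 'a set) = q"
proof -
  define f where "f x = x ^ q - (x::'a)" for x
  define s where "s = inv_into UNIV f"
  have fdiff: "f (x - y) = f x - f y" for x y by (simp add: f_def frob_diff)
  have fker: "f z = 0 \<longleftrightarrow> z \<in> Fq q" for z by (simp add: f_def Fq_iff)
  have Trf: "Tr (f x) = 0" for x
    by (simp add: f_def Tr_def frob_diff frob2_diff pow_qq pow_qq2)
  have sf: "f (s (f x)) = f x" for x unfolding s_def by (rule f_inv_into_f) simp
  have inj: "inj (\<lambda>x. (f x, x - s (f x)))"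
    by (rule injI) auto
  have "x - s (f x) \<in> Fq q" for x using sf[of x] fdiff[of x "s (f x)"] fker[of "x - s (f x)"] by simp
  hence sub: "range (\<lambda>x. (f x, x - s (f x))) \<subseteq> {x. Tr x = 0} \<times> Fq q"
    using Trf by auto
  have "card (UNIV::'a set) \<le> card ({x. Tr x = 0} \<times> (Fq q :: 'a set))"
    by (rule card_inj_on_le[OF inj sub]) simp
  also have "\<dots> = card {x. Tr x = 0} * card (Fq q :: 'a set)" by (rule card_cartesian_product)
  also have "\<dots> \<le> q^2 * card (Fq q :: 'a set)" using card_kerTr by simp
  finally have "q^2 * q \<le> q^2 * card (Fq q :: 'a set)" using cardF by (simp add: power3_eq_cube power2_eq_square mult_ac)
  hence "q \<le> card (Fq q :: 'a set)" using q_pos by simp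
  thus ?thesis using card_Fq_le by simp
qed


lemma less8: "i < (8::nat) \<Longrightarrow> i = 0 \<or> i = 1 \<or> i = 2 \<or> i = 3 \<or> i = 4 \<or> i = 5 \<or> i = 6 \<or> i = 7"
  by presburger

lemma sum8: "(\<Sum>j<(8::nat). f j) = f 0 + f 1 + f 2 + f 3 + f 4 + f 5 + f 6 + (f 7 :: 'a)"
  by (simp add: eval_nat_numeral add_ac)

lemma U1vec_nth:
  "U1vec q a b c d 0 = a" "U1vec q a b c d 1 = b ^ (q^2)" "U1vec q a b c d 2 = b ^ q"
  "U1vec q a b c d 3 = c" "U1vec q a b c d 4 = b" "U1vec q a b c d 5 = c ^ q"
  "U1vec q a b c d 6 = c ^ (q^2)" "U1vec q a b c d 7 = d"
  "i \<ge> 8 \<Longrightarrow> U1vec q a b c d i = 0" "U1vec q a b c d (Suc 0) = b ^ (q^2)"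
  by (simp_all add: U1vec_def vec8_def)

definition cyc :: "(nat \<Rightarrow> 'a) \<Rightarrow> bool" where
  "cyc v \<longleftrightarrow> (\<forall>i\<ge>8. v i = 0) \<and> v 0 ^ q = v 0 \<and> v 7 ^ q = v 7 \<and> v 4 ^ q = v 2 \<and> v 2 ^ q = v 1
     \<and> v 1 ^ q = v 4 \<and> v 3 ^ q = v 5 \<and> v 5 ^ q = v 6 \<and> v 6 ^ q = v 3"

lemmas frob_simps = power_mult_distrib pow_qq pow_q2q pow_qq2 pow_q2q2 frob_add frob2_add

lemma U1_cyc: "v \<in> U1 q \<longleftrightarrow> cyc v"
proof
  assume "v \<in> U1 q"
  then obtain a b c d where v: "v = U1vec q a b c d" "a \<in> Fq q" "d \<in> Fq q" unfolding U1_def by blast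
  show "cyc v" using v by (simp add: cyc_def U1vec_nth Fq_iff frob_simps)
next
  assume c: "cyc v"
  have e: "v 2 = v 4 ^ q" "v 1 = v 4 ^ (q^2)" "v 5 = v 3^q" "v 6 = v 3^(q^2)" "\<forall>i\<ge>8. v i = 0"
  proof -
    have c1: "v 4 ^ q = v 2" "v 2 ^ q = v 1" "v 3 ^ q = v 5" "v 5 ^ q = v 6" "\<forall>i\<ge>8. v i = 0"
      using c unfolding cyc_def by blast+
    show "v 2 = v 4 ^ q" "v 5 = v 3^q" "\<forall>i\<ge>8. v i = 0" using c1 by simp_all
    show "v 1 = v 4 ^ (q^2)" using c1(1,2) by (simp add: pow_qq[symmetric])
    show "v 6 = v 3 ^ (q^2)" using c1(3,4) by (simp add: pow_qq[symmetric])
  qed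
  have "v = U1vec q (v 0) (v 4) (v 3) (v 7)"
  proof
    fix i show "v i = U1vec q (v 0) (v 4) (v 3) (v 7) i"
    proof (cases "i < 8")
      case True
      then show ?thesis using e less8[OF True] by (auto simp: U1vec_nth)
    next
      case False
      then show ?thesis using e by (simp add: U1vec_nth)
    qed
  qed
  moreover have "v 0 \<in> Fq q" "v 7 \<in> Fq q" using c by (auto simp: cyc_def Fq_iff)
  ultimately show "v \<in> U1 q" unfolding U1_def by blast
qed

lemma cyc_add: "cyc u \<Longrightarrow> cyc w \<Longrightarrow> cyc (\<lambda>i. u i + w i)"
  by (simp add: cyc_def frob_add)

lemma cyc_scale: "cyc u \<Longrightarrow> l \<in> Fq q \<Longrightarrow> cyc (\<lambda>i. l * u i)"
  by (simp add: cyc_def Fq_iff power_mult_distrib)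

lemma U1_add: "(u::nat\<Rightarrow>'a) \<in> U1 q \<Longrightarrow> w \<in> U1 q \<Longrightarrow> (\<lambda>i. u i + w i) \<in> U1 q"
  unfolding U1_cyc by (rule cyc_add)

lemma U1_scale: "(u::nat\<Rightarrow>'a) \<in> U1 q \<Longrightarrow> l \<in> Fq q \<Longrightarrow> (\<lambda>i. l * u i) \<in> U1 q"
  unfolding U1_cyc by (rule cyc_scale)


definition cf :: "'a \<Rightarrow> 'a \<Rightarrow> nat \<Rightarrow> 'a" where "cf x y r = (if r = 0 then x else y)"

definition Tv :: "'a \<Rightarrow> 'a \<Rightarrow> nat \<Rightarrow> 'a" where
  "Tv x y j = (if j < 8 then cf x y (j div 4) * cf x y (j div 2 mod 2) ^ q * cf x y (j mod 2) ^ (q^2) else 0)"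

lemma Tv_U1vec: "Tv x y = U1vec q (x*x^q*x^(q^2)) (y*x^q*x^(q^2)) (x*y^q*y^(q^2)) (y*y^q*y^(q^2))"
proof
  fix i show "Tv x y i = U1vec q (x*x^q*x^(q^2)) (y*x^q*x^(q^2)) (x*y^q*y^(q^2)) (y*y^q*y^(q^2)) i"
  proof (cases "i < 8")
    case True
    then show ?thesis using less8[OF True] by (elim disjE) (simp_all add: Tv_def cf_def U1vec_nth frob_simps mult_ac)
  next
    case False
    then show ?thesis by (simp add: Tv_def U1vec_nth)
  qed
qed

definition Nm :: "'a \<Rightarrow> 'a" where "Nm x = x * x ^ q * x ^ (q^2)"

lemma Nm_Fq: "Nm x \<in> Fq q" by (simp add: Nm_def Fq_iff frob_simps mult_ac)

lemma Nm_nz: "x \<noteq> 0 \<Longrightarrow> Nm x \<noteq> 0" by (simp add: Nm_def)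

lemma Tv_U1: "Tv x y \<in> U1 q"
  unfolding Tv_U1vec U1_def using Nm_Fq[of x] Nm_Fq[of y] unfolding Nm_def by blast

lemma Tv_scale: "Tv (m * x) (m * y) = (\<lambda>j. Nm m * Tv x y j)"
proof
  fix j
  have c: "cf (m * x) (m * y) r = m * cf x y r" for r by (simp add: cf_def)
  have e: "(m * a) * (m * b) ^ q * (m * c) ^ (q^2) = (m * m ^ q * m ^ (q^2)) * (a * b ^ q * c ^ (q^2))" for a b c :: 'a
    by (simp add: power_mult_distrib)
  show "Tv (m * x) (m * y) j = Nm m * Tv x y j" unfolding Tv_def Nm_def c e by simp
qed

lemma Tv_nth:
  "Tv x y 0 = x * x^q * x^(q^2)" "Tv x y 1 = x * x^q * y^(q^2)" "Tv x y 2 = x * y^q * x^(q^2)"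
  "Tv x y 3 = x * y^q * y^(q^2)" "Tv x y 4 = y * x^q * x^(q^2)" "Tv x y 5 = y * x^q * y^(q^2)"
  "Tv x y 6 = y * y^q * x^(q^2)" "Tv x y 7 = y * y^q * y^(q^2)" "Tv x y (Suc 0) = x * x^q * y^(q^2)"
  by (simp_all add: Tv_def cf_def)

definition ge :: "'a \<Rightarrow> 'a \<Rightarrow> 'a \<Rightarrow> 'a \<Rightarrow> nat \<Rightarrow> nat \<Rightarrow> 'a" where
  "ge al be ga de r s = (if r = 0 then (if s = 0 then al else be) else (if s = 0 then ga else de))"

definition Mv :: "'a \<Rightarrow> 'a \<Rightarrow> 'a \<Rightarrow> 'a \<Rightarrow> (nat \<Rightarrow> 'a) \<Rightarrow> nat \<Rightarrow> 'a" where
  "Mv al be ga de v i = (if i < 8 then (\<Sum>j<8. ge al be ga de (i div 4) (j div 4)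
      * ge al be ga de (i div 2 mod 2) (j div 2 mod 2) ^ q * ge al be ga de (i mod 2) (j mod 2) ^ (q^2) * v j) else 0)"

lemma Mv_Tv: "Mv al be ga de (Tv x y) = Tv (al*x + be*y) (ga*x + de*y)"
proof
  fix i
  let ?G = "ge al be ga de"
  show "Mv al be ga de (Tv x y) i = Tv (al*x + be*y) (ga*x + de*y) i"
  proof (cases "i < 8")
    case True
    have cfg: "cf (al*x+be*y) (ga*x+de*y) r = ?G r 0 * x + ?G r 1 * y" for r by (simp add: cf_def ge_def)
    have R: "Tv (al*x+be*y) (ga*x+de*y) i = (?G (i div 4) 0 * x + ?G (i div 4) 1 * y)
       * (?G (i div 2 mod 2) 0 * x + ?G (i div 2 mod 2) 1 * y) ^ q * (?G (i mod 2) 0 * x + ?G (i mod 2) 1 * y) ^ (q^2)"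
      using True by (simp add: Tv_def cfg)
    show ?thesis unfolding R using True
      by (simp add: Mv_def sum8 Tv_nth frob_simps algebra_simps)
  next
    case False
    then show ?thesis by (simp add: Mv_def Tv_def)
  qed
qed

lemma cyc_Mv: "cyc v \<Longrightarrow> cyc (Mv al be ga de v)"
  unfolding cyc_def by (simp add: Mv_def sum8 ge_def frob_simps mult_ac add_ac)

lemma Mv_add: "Mv al be ga de (\<lambda>i. u i + w i) = (\<lambda>i. Mv al be ga de u i + Mv al be ga de w i)"
  by (rule ext) (simp add: Mv_def sum.distrib algebra_simps)

lemma Mv_scale: "Mv al be ga de (\<lambda>i. l * u i) = (\<lambda>i. l * Mv al be ga de u i)"
  by (rule ext) (simp add: Mv_def sum_distrib_left mult_ac)

lemma Mv_U1: "(v::nat\<Rightarrow>'a) \<in> U1 q \<Longrightarrow> Mv al be ga de v \<in> U1 q"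
  unfolding U1_cyc by (rule cyc_Mv)


definition flin :: "('a \<Rightarrow> 'a) \<Rightarrow> bool" where
  "flin f \<longleftrightarrow> (\<forall>x. f x \<in> Fq q) \<and> (\<forall>x y. f (x + y) = f x + f y) \<and> (\<forall>l\<in>Fq q. \<forall>x. f (l * x) = l * f x)"

lemma flin_Fq: "flin f \<Longrightarrow> f x \<in> Fq q" by (simp add: flin_def)
lemma flin_add: "flin f \<Longrightarrow> f (x + y) = f x + f y" by (simp add: flin_def)
lemma flin_scale: "flin f \<Longrightarrow> l \<in> Fq q \<Longrightarrow> f (l * x) = l * f x" by (simp add: flin_def)
lemma flin_0: "flin f \<Longrightarrow> f 0 = 0" using flin_add[of f 0 0] by (metis add.right_neutral add_left_cancel)
lemma flin_diff: "flin f \<Longrightarrow> f (x - y) = f x - f y"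
  using flin_add[of f "x - y" y] by (simp add: algebra_simps)
lemma flin_Fq_elem: "flin f \<Longrightarrow> l \<in> Fq q \<Longrightarrow> f l = l * f 1"
  using flin_scale[of f l 1] by simp

lemma ker_card:
  assumes f: "flin f" and v: "f v \<noteq> 0"
  shows "card {x. f x = 0} = q^2"
proof -
  define w where "w = (1 / f v) * v"
  have fw: "f w = 1" unfolding w_def using flin_scale[OF f Fq_div[OF Fq_1 flin_Fq[OF f, of v]], of v] v by simp
  let ?K = "{x. f x = 0}"
  have "bij_betw (\<lambda>(k,l). k + l * w) (?K \<times> Fq q) UNIV"
  proof (rule bij_betwI[where g = "\<lambda>y. (y - f y * w, f y)"])
    show "(\<lambda>(k,l). k + l * w) \<in> ?K \<times> Fq q \<rightarrow> UNIV" by simp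
    show "(\<lambda>y. (y - f y * w, f y)) \<in> UNIV \<rightarrow> ?K \<times> Fq q"
      using flin_diff[OF f] flin_scale[OF f flin_Fq[OF f]] fw flin_Fq[OF f] by auto
    show "(\<lambda>y. (y - f y * w, f y)) ((\<lambda>(k,l). k + l * w) x) = x" if "x \<in> ?K \<times> Fq q" for x
      using that flin_add[OF f] flin_scale[OF f] fw by auto
    show "(\<lambda>(k,l). k + l * w) ((\<lambda>y. (y - f y * w, f y)) y) = y" for y by simp
  qed
  hence "card (?K \<times> (Fq q :: 'a set)) = card (UNIV :: 'a set)" by (rule bij_betw_same_card)
  hence "card ?K * q = q^2 * q" using card_Fq cardF by (simp add: card_cartesian_product power3_eq_cube power2_eq_square)
  thus ?thesis using q_pos by simp
qed

lemma quad:
  assumes xyz: "x \<in> Fq q" "y \<in> Fq q" "z \<in> Fq q" and y0: "y \<noteq> 0"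
    and eq: "y * u * u + x * u + (z::'a) = 0"
  shows "u \<in> Fq q"
proof (rule ccontr)
  assume nu: "u \<notin> Fq q"
  hence uv: "u ^ q \<noteq> u" by (simp add: Fq_iff)
  have "(y * u * u + x * u + z) ^ q = 0" using eq q_pos by (simp add: power_0_left)
  hence eq2: "y * u^q * u^q + x * u^q + z = 0" using xyz by (simp add: frob_add power_mult_distrib Fq_iff)
  have "(u - u^q) * (y * (u + u^q) + x) = (y * u * u + x * u + z) - (y * u^q * u^q + x * u^q + z)"
    by (simp add: algebra_simps)
  hence "(u - u^q) * (y * (u + u^q) + x) = 0" using eq eq2 by simp
  hence E1: "y * (u + u^q) + x = 0" using uv by simp
  have "(y * (u + u^q) + x) ^ q = 0" using E1 q_pos by (simp add: power_0_left)
  hence E2: "y * (u^q + u^(q^2)) + x = 0" using xyz by (simp add: frob_add power_mult_distrib Fq_iff pow_qq)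
  have "y * (u - u^(q^2)) = (y * (u + u^q) + x) - (y * (u^q + u^(q^2)) + x)"
    by (simp add: algebra_simps)
  hence "y * (u - u^(q^2)) = 0" using E1 E2 by simp
  hence "u = u^(q^2)" using y0 by simp
  hence "u ^ q = u" by (metis pow_q2q)
  thus False using uv by simp
qed


abbreviation FQ :: "'a set" where "FQ \<equiv> Fq q"

lemma card_FQ: "card FQ = q" by (rule card_Fq)

lemma shift:
  assumes B: "flin B" and C: "flin C" and B1: "B 1 = 0" and C1: "C 1 = 0" and d: "d \<in> FQ"
  shows "B (t + d) + C ((t + d)^q * (t + d)^(q^2)) = (B t + C (t^q * t^(q^2))) - d * C t"
proof -
  have dq: "d ^ q = d" "d ^ (q^2) = d" using d by (simp_all add: Fq_iff Fq_pow2)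
  have e: "(t + d)^q * (t + d)^(q^2) = t^q * t^(q^2) + (d * Tr t - d * t) + (d * d) * 1"
    by (simp add: frob_add frob2_add dq algebra_simps Tr_def)
  have c1: "C (d * Tr t - d * t) = - (d * C t)"
    using flin_diff[OF C] flin_scale[OF C d] flin_Fq_elem[OF C Tr_Fq] C1 by simp
  have c2: "C ((d * d) * 1) = 0" using flin_scale[OF C Fq_mult[OF d d], of 1] C1 by simp
  have "C ((t + d)^q * (t + d)^(q^2)) = C (t^q * t^(q^2)) - d * C t"
    unfolding e flin_add[OF C] c1 c2 by simp
  moreover have "B (t + d) = B t" using flin_add[OF B] flin_Fq_elem[OF B d] B1 by simp
  ultimately show ?thesis using C1 by (simp add: algebra_simps)
qed

lemma gamma:
  assumes C: "flin C" and C1: "C 1 = 0" and u: "u \<notin> FQ" and Cu: "C u = 0"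
    and rep: "\<And>k. C k = 0 \<Longrightarrow> \<exists>c\<in>FQ. \<exists>l\<in>FQ. k = c + l * u"
  shows "C (u^q * u^(q^2)) \<noteq> 0"
proof
  assume "C (u^q * u^(q^2)) = 0"
  then obtain c l where cl: "c \<in> FQ" "l \<in> FQ" "u^q * u^(q^2) = c + l * u" using rep by blast
  have u0: "u \<noteq> 0" using u by auto
  have N: "Nm u = u * (c + l * u)" using cl(3) by (simp add: Nm_def mult.assoc)
  show False
  proof (cases "l = 0")
    case False
    have "l * u * u + c * u + (- Nm u) = 0" using N by (simp add: algebra_simps)
    hence "u \<in> FQ" using quad[OF cl(1) cl(2) Fq_neg[OF Nm_Fq] False] by blast
    thus False using u by simp
  next
    case True
    hence "Nm u = u * c" using N by simp
    moreover have "Nm u \<noteq> 0" using Nm_nz[OF u0] .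
    ultimately have c0: "c \<noteq> 0" by auto
    have "u = Nm u / c" using \<open>Nm u = u * c\<close> c0 by (simp add: field_simps)
    moreover have "Nm u / c \<in> FQ" using Fq_div[OF Nm_Fq[of u] cl(1)] .
    ultimately have "u \<in> FQ" by simp
    thus False using u by simp
  qed
qed


lemma core:
  assumes B: "flin B" and C: "flin C" and B1: "B 1 = 0" and C1: "C 1 = 0"
    and ex: "\<exists>t. B t + C (t^q * t^(q^2)) \<noteq> 0"
  shows "card {t. B t + C (t^q * t^(q^2)) = 0} \<in> {q^2, q^2 + q}"
proof -
  define Z where "Z t = B t + C (t^q * t^(q^2))" for t
  have ZF: "Z t \<in> FQ" for t unfolding Z_def using flin_Fq[OF B] flin_Fq[OF C] Fq_add by blast
  have sh: "Z (t + d) = Z t - d * C t" if "d \<in> FQ" for t d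
    unfolding Z_def using shift[OF B C B1 C1 that] .
  have Cs: "C (t + d) = C t" if "d \<in> FQ" for t d
    using flin_add[OF C] flin_Fq_elem[OF C that] C1 by simp
  have "card {t. Z t = 0} \<in> {q^2, q^2 + q}"
  proof (cases "\<forall>x. C x = 0")
    case True
    hence ZB: "{t. Z t = 0} = {t. B t = 0}" by (simp add: Z_def flin_0[OF C])
    obtain t where "Z t \<noteq> 0" using ex Z_def by auto
    hence "B t \<noteq> 0" using True by (simp add: Z_def)
    thus ?thesis using ker_card[OF B] ZB by simp
  next
    case False
    then obtain v where Cv: "C v \<noteq> 0" by blast
    define K where "K = {x. C x = 0}"
    have cardK: "card K = q^2" unfolding K_def using ker_card[OF C Cv] .
    define S where "S = {t. Z t = 0}"
    have fin: "finite (A :: 'a set)" for A by simp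
    have finp: "finite (A :: ('a \<times> 'a) set)" for A by simp
    have bijA: "bij_betw (\<lambda>(s,c). s + c) ((S - K) \<times> FQ) (UNIV - K)"
    proof (rule bij_betwI[where g = "\<lambda>y. (y + Z y / C y, - (Z y / C y))"])
      show "(\<lambda>(s,c). s + c) \<in> (S - K) \<times> FQ \<rightarrow> UNIV - K"
        using Cs by (auto simp: K_def)
      show "(\<lambda>y. (y + Z y / C y, - (Z y / C y))) \<in> UNIV - K \<rightarrow> (S - K) \<times> FQ"
      proof
        fix y assume y: "y \<in> UNIV - K"
        hence Cy: "C y \<noteq> 0" by (simp add: K_def)
        have e: "Z y / C y \<in> FQ" using Fq_div[OF ZF flin_Fq[OF C]] .
        have "Z (y + Z y / C y) = 0" using sh[OF e] Cy by simp
        moreover have "C (y + Z y / C y) \<noteq> 0" using Cs[OF e] Cy by simp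
        ultimately show "(y + Z y / C y, - (Z y / C y)) \<in> (S - K) \<times> FQ"
          using Fq_neg[OF e] by (simp add: S_def K_def)
      qed
      show "(\<lambda>y. (y + Z y / C y, - (Z y / C y))) ((\<lambda>(s,c). s + c) x) = x" if xin: "x \<in> (S - K) \<times> FQ" for x
      proof -
        obtain s c where x: "x = (s, c)" "s \<in> S" "s \<notin> K" "c \<in> FQ" using xin by auto
        have Cs0: "C s \<noteq> 0" using x by (simp add: K_def)
        have "Z (s + c) = - (c * C s)" using sh[OF x(4)] x(2) by (simp add: S_def)
        moreover have "C (s + c) = C s" using Cs[OF x(4)] .
        ultimately have "Z (s + c) / C (s + c) = - c" using Cs0 by (simp add: field_simps)
        thus ?thesis using x by simp
      qed
      show "(\<lambda>(s,c). s + c) ((\<lambda>y. (y + Z y / C y, - (Z y / C y))) y) = y" for y by simp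
    qed
    hence "card ((S - K) \<times> FQ) = card (UNIV - K)" by (rule bij_betw_same_card)
    also have "card (UNIV - K) = q^3 - q^2" using cardK cardF by (simp add: card_Diff_subset)
    finally have "card (S - K) * q = q^3 - q^2" by (simp add: card_cartesian_product card_FQ)
    also have "q^3 - q^2 = (q^2 - q) * q" by (simp add: power3_eq_cube power2_eq_square diff_mult_distrib)
    finally have cardA: "card (S - K) = q^2 - q" using q_pos by simp
    obtain u where uK: "u \<in> K" and uF: "u \<notin> FQ"
    proof -
      have "\<not> K \<subseteq> FQ"
      proof
        assume "K \<subseteq> FQ"
        hence "card K \<le> card FQ" by (intro card_mono) simp_all
        hence "q^2 \<le> q" using cardK card_FQ by simp
        thus False using q4 by (simp add: power2_eq_square)
      qed
      thus ?thesis using that by blast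
    qed
    have Cu: "C u = 0" using uK by (simp add: K_def)
    define f where "f = (\<lambda>(c, l). c + l * (u::'a))"
    have injf: "inj_on f (FQ \<times> FQ)"
    proof (rule inj_onI)
      fix a b assume a: "a \<in> FQ \<times> FQ" and b: "b \<in> FQ \<times> FQ" and fab: "f a = f b"
      obtain c l where a': "a = (c, l)" "c \<in> FQ" "l \<in> FQ" using a by auto
      obtain c' l' where b': "b = (c', l')" "c' \<in> FQ" "l' \<in> FQ" using b by auto
      have eq: "c + l * u = c' + l' * u" using fab a' b' by (simp add: f_def)
      have "l = l'"
      proof (rule ccontr)
        assume ne: "l \<noteq> l'"
        have "(l - l') * u = c' - c" using eq by (simp add: algebra_simps)
        hence "u = (c' - c) / (l - l')" using ne by (simp add: field_simps)
        moreover have "(c' - c) / (l - l') \<in> FQ" using Fq_div Fq_diff a' b' by blast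
        ultimately show False using uF by simp
      qed
      thus "a = b" using eq a' b' by simp
    qed
    have fK: "f ` (FQ \<times> FQ) = K"
    proof (rule card_subset_eq)
      show "finite K" by simp
      show "f ` (FQ \<times> FQ) \<subseteq> K"
        using flin_add[OF C] flin_scale[OF C] flin_Fq_elem[OF C] C1 Cu by (auto simp: f_def K_def)
      show "card (f ` (FQ \<times> FQ)) = card K"
        using card_image[OF injf] cardK card_FQ by (simp add: card_cartesian_product power2_eq_square)
    qed
    have rep: "\<exists>c\<in>FQ. \<exists>l\<in>FQ. k = c + l * u" if "C k = 0" for k
    proof -
      have "k \<in> f ` (FQ \<times> FQ)" using fK that by (simp add: K_def)
      thus ?thesis by (auto simp: f_def)
    qed
    define g0 where "g0 = C (u^q * u^(q^2))"
    have g0: "g0 \<noteq> 0" unfolding g0_def using gamma[OF C C1 uF Cu rep] by blast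
    have Zf: "Z (c + l * u) = l * (B u + l * g0)" if "c \<in> FQ" "l \<in> FQ" for c l
    proof -
      have "Z (l * u + c) = Z (l * u) - c * C (l * u)" using sh[OF that(1)] .
      moreover have "C (l * u) = 0" using flin_scale[OF C that(2)] Cu by simp
      moreover have lq: "l^q = l" "l^(q^2) = l" using that(2) by (simp_all add: Fq_iff Fq_pow2)
      have p: "(l * u)^q * (l * u)^(q^2) = (l * l) * (u^q * u^(q^2))"
        by (simp add: power_mult_distrib lq mult_ac)
      have "C ((l * l) * (u^q * u^(q^2))) = (l * l) * g0"
        using flin_scale[OF C Fq_mult[OF that(2) that(2)]] g0_def by simp
      hence "Z (l * u) = l * B u + (l * l) * g0" unfolding Z_def p using flin_scale[OF B that(2)] by simp
      ultimately show ?thesis by (simp add: add.commute algebra_simps)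
    qed
    define r where "r = - B u / g0"
    have rF: "r \<in> FQ" unfolding r_def using Fq_div[OF Fq_neg[OF flin_Fq[OF B]] flin_Fq[OF C]] g0_def by simp
    have SK: "S \<inter> K = f ` (FQ \<times> {0, r})"
    proof
      show "S \<inter> K \<subseteq> f ` (FQ \<times> {0, r})"
      proof
        fix x assume x: "x \<in> S \<inter> K"
        hence "C x = 0" by (simp add: K_def)
        then obtain c l where cl: "c \<in> FQ" "l \<in> FQ" "x = c + l * u" using rep by blast
        have "l * (B u + l * g0) = 0" using Zf[OF cl(1,2)] x cl(3) by (simp add: S_def)
        hence "l = 0 \<or> B u + l * g0 = 0" by simp
        moreover have "B u + l * g0 = 0 \<Longrightarrow> l = r" using g0 unfolding r_def by (simp add: field_simps add_eq_0_iff)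
        ultimately have "l = 0 \<or> l = r" by blast
        thus "x \<in> f ` (FQ \<times> {0, r})" using cl by (auto simp: f_def)
      qed
      show "f ` (FQ \<times> {0, r}) \<subseteq> S \<inter> K"
      proof
        fix x assume "x \<in> f ` (FQ \<times> {0, r})"
        then obtain c l where cl: "c \<in> FQ" "l \<in> {0, r}" "x = c + l * u" by (auto simp: f_def)
        have lF: "l \<in> FQ" using cl(2) rF by auto
        have "x \<in> K" using fK cl(1) lF cl(3) by (auto simp: f_def)
        moreover have "Z x = 0"
        proof -
          have "B u + l * g0 = 0 \<or> l = 0" using cl(2) g0 by (auto simp: r_def)
          hence "l * (B u + l * g0) = 0" by auto
          thus ?thesis using Zf[OF cl(1) lF] cl(3) by simp
        qed
        ultimately show "x \<in> S \<inter> K" by (simp add: S_def)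
      qed
    qed
    have "card (S \<inter> K) = card (FQ \<times> {0, r})"
      unfolding SK by (rule card_image) (rule inj_on_subset[OF injf], use rF in auto)
    hence cardB: "card (S \<inter> K) = q * card {0, r}" by (simp add: card_cartesian_product card_FQ)
    have "card S = card (S \<inter> K) + card (S - K)"
      by (metis card_Int_Diff fin)
    hence "card S = q * card {0, r} + (q^2 - q)" using cardA cardB by simp
    moreover have "q \<le> q^2" by (simp add: power2_eq_square)
    moreover have "card {0, r} = 1 \<or> card {0, r} = 2" by (cases "r = 0") auto
    ultimately have "card S = q^2 \<or> card S = q^2 + q" by auto
    thus ?thesis by (simp add: S_def)
  qed
  thus ?thesis by (simp add: Z_def)
qed


lemma r2_ex: "\<exists>r. r \<in> FQ \<and> r \<noteq> 0 \<and> r \<noteq> 1"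
proof (rule ccontr)
  assume "\<not> ?thesis"
  hence "FQ \<subseteq> {0, 1}" by auto
  hence "card FQ \<le> card {0::'a, 1}" by (intro card_mono) auto
  also have "\<dots> \<le> 2" by (simp add: card_insert_if)
  finally show False using card_FQ q4 by simp
qed

definition lin :: "((nat \<Rightarrow> 'a) \<Rightarrow> 'a) \<Rightarrow> bool" where
  "lin \<phi> \<longleftrightarrow> (\<forall>u\<in>U1 q. \<phi> u \<in> FQ) \<and> (\<forall>u\<in>U1 q. \<forall>w\<in>U1 q. \<phi> (\<lambda>i. u i + w i) = \<phi> u + \<phi> w)
     \<and> (\<forall>l\<in>FQ. \<forall>u\<in>U1 q. \<phi> (\<lambda>i. l * u i) = l * \<phi> u)"

lemma U1vec_add: "(\<lambda>i. U1vec q (a::'a) b c d i + U1vec q a' b' c' d' i) = U1vec q (a+a') (b+b') (c+c') (d+d')"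
proof
  fix i show "U1vec q a b c d i + U1vec q a' b' c' d' i = U1vec q (a+a') (b+b') (c+c') (d+d') i"
  proof (cases "i < 8")
    case True
    then show ?thesis using less8[OF True] by (elim disjE) (simp_all add: U1vec_nth frob_add frob2_add)
  qed (simp add: U1vec_nth)
qed

lemma U1vec_sc: "l \<in> FQ \<Longrightarrow> (\<lambda>i. l * U1vec q a b c d i) = U1vec q (l*a) (l*b) (l*c) (l*d)"
proof
  fix i assume l: "l \<in> FQ"
  have lq: "l^q = l" "l^(q^2) = l" using l by (simp_all add: Fq_iff Fq_pow2)
  show "l * U1vec q a b c d i = U1vec q (l*a) (l*b) (l*c) (l*d) i"
  proof (cases "i < 8")
    case True
    then show ?thesis using less8[OF True] by (elim disjE) (simp_all add: U1vec_nth power_mult_distrib lq)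
  qed (simp add: U1vec_nth)
qed

lemma U1vec_mem: "a \<in> FQ \<Longrightarrow> d \<in> FQ \<Longrightarrow> U1vec q a b c d \<in> U1 q"
  unfolding U1_def by blast

definition Bf :: "((nat \<Rightarrow> 'a) \<Rightarrow> 'a) \<Rightarrow> 'a \<Rightarrow> 'a" where "Bf \<phi> b = \<phi> (U1vec q 0 b 0 0)"
definition Cf :: "((nat \<Rightarrow> 'a) \<Rightarrow> 'a) \<Rightarrow> 'a \<Rightarrow> 'a" where "Cf \<phi> c = \<phi> (U1vec q 0 0 c 0)"

lemma lin_Fq: "lin \<phi> \<Longrightarrow> u \<in> U1 q \<Longrightarrow> \<phi> u \<in> FQ" by (simp add: lin_def)
lemma lin_add: "lin \<phi> \<Longrightarrow> u \<in> U1 q \<Longrightarrow> w \<in> U1 q \<Longrightarrow> \<phi> (\<lambda>i. u i + w i) = \<phi> u + \<phi> w" by (simp add: lin_def)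
lemma lin_scale: "lin \<phi> \<Longrightarrow> l \<in> FQ \<Longrightarrow> u \<in> U1 q \<Longrightarrow> \<phi> (\<lambda>i. l * u i) = l * \<phi> u" by (simp add: lin_def)

lemma decomp:
  assumes \<phi>: "lin \<phi>" and a: "a \<in> FQ" and d: "d \<in> FQ"
  shows "\<phi> (U1vec q a b c d) = a * \<phi> (U1vec q 1 0 0 0) + Bf \<phi> b + Cf \<phi> c + d * \<phi> (U1vec q 0 0 0 1)"
proof -
  have e1: "U1vec q a b c d = (\<lambda>i. U1vec q a 0 0 0 i + U1vec q 0 b c d i)" by (simp add: U1vec_add)
  have e2: "U1vec q 0 b c d = (\<lambda>i. U1vec q 0 b 0 0 i + U1vec q 0 0 c d i)" by (simp add: U1vec_add)
  have e3: "U1vec q 0 0 c d = (\<lambda>i. U1vec q 0 0 c 0 i + U1vec q 0 0 0 d i)" by (simp add: U1vec_add)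
  have e4: "U1vec q a 0 0 0 = (\<lambda>i. a * U1vec q 1 0 0 0 i)" using U1vec_sc[OF a] by simp
  have e5: "U1vec q 0 0 0 d = (\<lambda>i. d * U1vec q 0 0 0 1 i)" using U1vec_sc[OF d] by simp
  have m: "U1vec q (1::'a) 0 0 0 \<in> U1 q" "U1vec q (0::'a) 0 0 1 \<in> U1 q" "U1vec q 0 b 0 0 \<in> U1 q"
     "U1vec q 0 0 c 0 \<in> U1 q" "U1vec q 0 0 c d \<in> U1 q" "U1vec q 0 b c d \<in> U1 q"
     "U1vec q a 0 0 0 \<in> U1 q" "U1vec q 0 0 0 d \<in> U1 q"
    using a d by (simp_all add: U1vec_mem)
  have "\<phi> (U1vec q a b c d) = \<phi> (U1vec q a 0 0 0) + (\<phi> (U1vec q 0 b 0 0) + (\<phi> (U1vec q 0 0 c 0) + \<phi> (U1vec q 0 0 0 d)))"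
    by (subst e1, subst lin_add[OF \<phi> m(7) m(6)], subst e2, subst lin_add[OF \<phi> m(3) m(5)],
        subst e3, subst lin_add[OF \<phi> m(4) m(8)], rule refl)
  also have "\<phi> (U1vec q a 0 0 0) = a * \<phi> (U1vec q 1 0 0 0)" by (subst e4, rule lin_scale[OF \<phi> a m(1)])
  also have "\<phi> (U1vec q 0 0 0 d) = d * \<phi> (U1vec q 0 0 0 1)" by (subst e5, rule lin_scale[OF \<phi> d m(2)])
  finally show ?thesis by (simp add: Bf_def Cf_def add_ac)
qed

lemma flin_Bf: "lin \<phi> \<Longrightarrow> flin (Bf \<phi>)"
  unfolding flin_def Bf_def
proof (intro conjI allI ballI)
  assume \<phi>: "lin \<phi>"
  show "\<phi> (U1vec q 0 x 0 0) \<in> FQ" for x using lin_Fq[OF \<phi> U1vec_mem] by simp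
  show "\<phi> (U1vec q 0 (x + y) 0 0) = \<phi> (U1vec q 0 x 0 0) + \<phi> (U1vec q 0 y 0 0)" for x y
    using lin_add[OF \<phi> U1vec_mem[OF Fq_0 Fq_0, of x 0] U1vec_mem[OF Fq_0 Fq_0, of y 0]] by (simp add: U1vec_add)
  show "\<phi> (U1vec q 0 (l * x) 0 0) = l * \<phi> (U1vec q 0 x 0 0)" if "l \<in> Fq q" for l x
    using lin_scale[OF \<phi> that U1vec_mem[OF Fq_0 Fq_0, of x 0]] U1vec_sc[OF that] by simp
qed

lemma flin_Cf: "lin \<phi> \<Longrightarrow> flin (Cf \<phi>)"
  unfolding flin_def Cf_def
proof (intro conjI allI ballI)
  assume \<phi>: "lin \<phi>"
  show "\<phi> (U1vec q 0 0 x 0) \<in> FQ" for x using lin_Fq[OF \<phi> U1vec_mem] by simp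
  show "\<phi> (U1vec q 0 0 (x + y) 0) = \<phi> (U1vec q 0 0 x 0) + \<phi> (U1vec q 0 0 y 0)" for x y
    using lin_add[OF \<phi> U1vec_mem[OF Fq_0 Fq_0, of 0 x] U1vec_mem[OF Fq_0 Fq_0, of 0 y]] by (simp add: U1vec_add)
  show "\<phi> (U1vec q 0 0 (l * x) 0) = l * \<phi> (U1vec q 0 0 x 0)" if "l \<in> Fq q" for l x
    using lin_scale[OF \<phi> that U1vec_mem[OF Fq_0 Fq_0, of 0 x]] U1vec_sc[OF that] by simp
qed

definition Xo :: "'a option \<Rightarrow> 'a \<times> 'a" where
  "Xo x = (case x of Some t \<Rightarrow> (1, t) | None \<Rightarrow> (0, 1))"

definition Wv :: "'a option \<Rightarrow> nat \<Rightarrow> 'a" where "Wv x = Tv (fst (Xo x)) (snd (Xo x))"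

lemma Wv_Some: "Wv (Some t) = U1vec q 1 t (t^q * t^(q^2)) (Nm t)"
  by (simp add: Wv_def Xo_def Tv_U1vec Nm_def)

lemma Wv_None: "Wv None = U1vec q 0 0 0 1"
proof -
  have "q \<noteq> 0" "q^2 \<noteq> 0" using q_pos by simp_all
  thus ?thesis by (simp add: Wv_def Xo_def Tv_U1vec power_0_left)
qed

lemma Wv_U1: "Wv x \<in> U1 q" by (simp add: Wv_def Tv_U1)

lemma theta_Wv: "theta q x = pt q (Wv x)"
proof (cases x)
  case None thus ?thesis by (simp add: theta_def Wv_None)
next
  case (Some t)
  have "t ^ (q^2 + q) = t^q * t^(q^2)" "t ^ (q^2 + q + 1) = Nm t"
    by (simp_all add: power_add Nm_def mult_ac)
  thus ?thesis using Some by (simp add: theta_def Wv_Some)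
qed

lemma phi_Wv_Some: "lin \<phi> \<Longrightarrow> \<phi> (Wv (Some t)) = \<phi> (U1vec q 1 0 0 0) + Bf \<phi> t + Cf \<phi> (t^q * t^(q^2)) + Nm t * \<phi> (U1vec q 0 0 0 1)"
  unfolding Wv_Some by (subst decomp[OF _ Fq_1 Nm_Fq]) simp_all

lemma phi_Wv_None: "lin \<phi> \<Longrightarrow> \<phi> (Wv None) = \<phi> (U1vec q 0 0 0 1)"
  unfolding Wv_None by (subst decomp[OF _ Fq_0 Fq_1]) (simp_all add: Bf_def[symmetric] Cf_def[symmetric] flin_0 flin_Bf flin_Cf)

end


context ffq
begin

lemma hyp_fun:
  assumes hyp: "hyperplane q (H :: (nat \<Rightarrow> 'a) set)"
  shows "\<exists>\<phi>. lin \<phi> \<and> (\<forall>u\<in>U1 q. u \<in> H \<longleftrightarrow> \<phi> u = 0) \<and> (\<exists>u\<in>U1 q. \<phi> u \<noteq> 0)"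
proof -
  have sub: "fq_subspace q H" and HU: "H \<subseteq> U1 q" and ne: "H \<noteq> U1 q"
    and mx: "\<forall>v\<in>U1 q - H. \<forall>u\<in>U1 q. \<exists>h\<in>H. \<exists>l\<in>FQ. u = (\<lambda>i. h i + l * v i)"
    using hyp unfolding hyperplane_def by blast+
  have z: "(\<lambda>i. 0) \<in> H" and addH: "\<And>x y. x \<in> H \<Longrightarrow> y \<in> H \<Longrightarrow> (\<lambda>i. x i + y i) \<in> H"
    and scH: "\<And>l x. l \<in> FQ \<Longrightarrow> x \<in> H \<Longrightarrow> (\<lambda>i. l * x i) \<in> H"
    using sub unfolding fq_subspace_def by blast+
  obtain v0 where v0: "v0 \<in> U1 q" "v0 \<notin> H" using HU ne by blast
  have uniq: "l = l'" if h: "h \<in> H" "h' \<in> H" "l \<in> FQ" "l' \<in> FQ"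
    and e: "(\<lambda>i. h i + l * v0 i) = (\<lambda>i. h' i + l' * v0 i)" for h h' l l'
  proof (rule ccontr)
    assume ne: "l \<noteq> l'"
    define k where "k = 1 / (l - l')"
    have kF: "k \<in> FQ" unfolding k_def using Fq_div[OF Fq_1 Fq_diff[OF h(3,4)]] .
    have m1: "(-1::'a) \<in> FQ" using Fq_neg[OF Fq_1] .
    have w: "(\<lambda>i. k * (h' i + (-1) * h i)) \<in> H" using scH[OF kF addH[OF h(2) scH[OF m1 h(1)]]] .
    have "(\<lambda>i. k * (h' i + (-1) * h i)) = v0"
    proof
      fix i
      have "h i + l * v0 i = h' i + l' * v0 i" using e by meson
      hence "(l - l') * v0 i = h' i - h i" by (simp add: algebra_simps)
      thus "k * (h' i + (-1) * h i) = v0 i" using ne unfolding k_def by (simp add: field_simps)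
    qed
    thus False using w v0 by simp
  qed
  define \<phi> where "\<phi> u = (THE l. l \<in> FQ \<and> (\<exists>h\<in>H. u = (\<lambda>i. h i + l * v0 i)))" for u
  have phi_eq: "\<phi> u = l" if hu: "h \<in> H" "l \<in> FQ" "u = (\<lambda>i. h i + l * v0 i)" for u h l
    unfolding \<phi>_def
  proof (rule the_equality)
    show "l \<in> FQ \<and> (\<exists>h\<in>H. u = (\<lambda>i. h i + l * v0 i))" using hu by blast
    show "l' = l" if l': "l' \<in> FQ \<and> (\<exists>h\<in>H. u = (\<lambda>i. h i + l' * v0 i))" for l'
    proof -
      obtain h' where h': "h' \<in> H" "u = (\<lambda>i. h' i + l' * v0 i)" using l' by blast
      have "(\<lambda>i. h' i + l' * v0 i) = (\<lambda>i. h i + l * v0 i)" using h'(2) hu(3) by simp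
      thus ?thesis using uniq[OF h'(1) hu(1) _ hu(2)] l' by blast
    qed
  qed
  have ch: "\<phi> u \<in> FQ \<and> (\<exists>h\<in>H. u = (\<lambda>i. h i + \<phi> u * v0 i))" if "u \<in> U1 q" for u
  proof -
    have "v0 \<in> U1 q - H" using v0 by blast
    from mx[rule_format, OF this that] obtain h l where hl: "h \<in> H" "l \<in> FQ" "u = (\<lambda>i. h i + l * v0 i)" by blast
    have "\<phi> u = l" using phi_eq[OF hl] .
    thus ?thesis using hl by blast
  qed
  have "lin \<phi>"
    unfolding lin_def
  proof (intro conjI ballI)
    show "\<phi> u \<in> FQ" if "u \<in> U1 q" for u using ch[OF that] by blast
    show "\<phi> (\<lambda>i. u i + w i) = \<phi> u + \<phi> w" if uw: "u \<in> U1 q" "w \<in> U1 q" for u w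
    proof -
      obtain h1 where h1: "h1 \<in> H" "u = (\<lambda>i. h1 i + \<phi> u * v0 i)" using ch[OF uw(1)] by blast
      obtain h2 where h2: "h2 \<in> H" "w = (\<lambda>i. h2 i + \<phi> w * v0 i)" using ch[OF uw(2)] by blast
      have p1: "u i = h1 i + \<phi> u * v0 i" for i using fun_cong[OF h1(2), of i] by simp
      have p2: "w i = h2 i + \<phi> w * v0 i" for i using fun_cong[OF h2(2), of i] by simp
      have "(\<lambda>i. u i + w i) = (\<lambda>i. (\<lambda>i. h1 i + h2 i) i + (\<phi> u + \<phi> w) * v0 i)"
        by (rule ext) (simp add: p1 p2 algebra_simps)
      thus ?thesis using phi_eq[OF addH[OF h1(1) h2(1)] Fq_add[OF conjunct1[OF ch[OF uw(1)]] conjunct1[OF ch[OF uw(2)]]]] by blast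
    qed
    show "\<phi> (\<lambda>i. l * u i) = l * \<phi> u" if lu: "l \<in> FQ" "u \<in> U1 q" for l u
    proof -
      obtain h1 where h1: "h1 \<in> H" "u = (\<lambda>i. h1 i + \<phi> u * v0 i)" using ch[OF lu(2)] by blast
      have p1: "u i = h1 i + \<phi> u * v0 i" for i using fun_cong[OF h1(2), of i] by simp
      have "(\<lambda>i. l * u i) = (\<lambda>i. (\<lambda>i. l * h1 i) i + (l * \<phi> u) * v0 i)"
        by (rule ext) (simp add: p1 algebra_simps)
      thus ?thesis using phi_eq[OF scH[OF lu(1) h1(1)] Fq_mult[OF lu(1) conjunct1[OF ch[OF lu(2)]]]] by blast
    qed
  qed
  moreover have "\<forall>u\<in>U1 q. u \<in> H \<longleftrightarrow> \<phi> u = 0"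
  proof (intro ballI iffI)
    fix u assume "u \<in> U1 q" "u \<in> H"
    thus "\<phi> u = 0" using phi_eq[of u 0 u] by (simp add: Fq_0)
  next
    fix u assume u: "u \<in> U1 q" "\<phi> u = 0"
    then obtain h where h: "h \<in> H" "u = (\<lambda>i. h i + \<phi> u * v0 i)" using ch by blast
    have "u i = h i" for i using fun_cong[OF h(2), of i] u(2) by simp
    hence "u = h" by (rule ext)
    thus "u \<in> H" using h(1) by simp
  qed
  moreover have "\<phi> v0 = 1" using phi_eq[OF z Fq_1, of v0] by simp
  ultimately show ?thesis using v0 by force
qed

lemma lin2:
  assumes "al * d1 + be * d2 = 0" "ga * d1 + de * d2 = 0" "al * de - be * ga \<noteq> (0::'a)"
  shows "d1 = 0 \<and> d2 = 0"
proof -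
  have e1: "(al * de - be * ga) * d1 = de * (al * d1 + be * d2) - be * (ga * d1 + de * d2)" by (simp add: algebra_simps)
  have e2: "(al * de - be * ga) * d2 = al * (ga * d1 + de * d2) - ga * (al * d1 + be * d2)" by (simp add: algebra_simps)
  have "(al * de - be * ga) * d1 = 0" unfolding e1 assms(1,2) by simp
  moreover have "(al * de - be * ga) * d2 = 0" unfolding e2 assms(1,2) by simp
  ultimately show ?thesis using assms(3) by simp
qed

lemma mob_X:
  assumes det: "al * de - be * ga \<noteq> (0::'a)"
  shows "\<exists>\<mu>. \<mu> \<noteq> 0 \<and> al * fst (Xo x) + be * snd (Xo x) = \<mu> * fst (Xo (mob al be ga de x))
     \<and> ga * fst (Xo x) + de * snd (Xo x) = \<mu> * snd (Xo (mob al be ga de x))"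
proof (cases x)
  case None
  show ?thesis
  proof (cases "be = 0")
    case True
    hence d: "de \<noteq> 0" using det by auto
    have "mob al be ga de x = None" using None True by (simp add: mob_def)
    thus ?thesis using None True d by (intro exI[of _ de]) (simp add: Xo_def)
  next
    case False
    have "mob al be ga de x = Some (de / be)" using None False by (simp add: mob_def)
    thus ?thesis using None False by (intro exI[of _ be]) (simp add: Xo_def)
  qed
next
  case (Some t)
  show ?thesis
  proof (cases "al + be * t = 0")
    case True
    have "ga + de * t \<noteq> 0"
    proof
      assume h: "ga + de * t = 0"
      have h1: "al * 1 + be * t = 0" using True by simp
      have h2: "ga * 1 + de * t = 0" using h by simp
      have "(1::'a) = 0 \<and> t = 0" by (rule lin2[OF h1 h2 det])
      thus False by simp
    qed
    moreover have "mob al be ga de x = None" using Some True by (simp add: mob_def)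
    ultimately show ?thesis using Some True by (intro exI[of _ "ga + de * t"]) (simp add: Xo_def)
  next
    case False
    have "mob al be ga de x = Some ((ga + de * t) / (al + be * t))" using Some False by (simp add: mob_def)
    thus ?thesis using Some False by (intro exI[of _ "al + be * t"]) (simp add: Xo_def)
  qed
qed

lemma Mv_Wv:
  assumes det: "al * de - be * ga \<noteq> (0::'a)"
  shows "\<exists>\<mu>. \<mu> \<noteq> 0 \<and> Mv al be ga de (Wv x) = (\<lambda>j. Nm \<mu> * Wv (mob al be ga de x) j)"
proof -
  obtain \<mu> where m: "\<mu> \<noteq> 0" "al * fst (Xo x) + be * snd (Xo x) = \<mu> * fst (Xo (mob al be ga de x))"
     "ga * fst (Xo x) + de * snd (Xo x) = \<mu> * snd (Xo (mob al be ga de x))" using mob_X[OF det] by blast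
  have "Mv al be ga de (Wv x) = (\<lambda>j. Nm \<mu> * Wv (mob al be ga de x) j)"
    unfolding Wv_def Mv_Tv m(2) m(3) Tv_scale ..
  thus ?thesis using m(1) by blast
qed

lemma mob_inj:
  assumes det: "al * de - be * ga \<noteq> (0::'a)"
  shows "inj (mob al be ga de)"
proof (rule injI)
  fix x y assume e: "mob al be ga de x = mob al be ga de y"
  obtain \<mu> where m: "\<mu> \<noteq> 0" "al * fst (Xo x) + be * snd (Xo x) = \<mu> * fst (Xo (mob al be ga de x))"
     "ga * fst (Xo x) + de * snd (Xo x) = \<mu> * snd (Xo (mob al be ga de x))" using mob_X[OF det] by blast
  obtain \<nu> where n: "\<nu> \<noteq> 0" "al * fst (Xo y) + be * snd (Xo y) = \<nu> * fst (Xo (mob al be ga de x))"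
     "ga * fst (Xo y) + de * snd (Xo y) = \<nu> * snd (Xo (mob al be ga de x))" using mob_X[OF det, of y] e by auto
  define k where "k = \<mu> / \<nu>"
  have "al * (fst (Xo x) - k * fst (Xo y)) + be * (snd (Xo x) - k * snd (Xo y))
      = (al * fst (Xo x) + be * snd (Xo x)) - k * (al * fst (Xo y) + be * snd (Xo y))" by (simp add: algebra_simps)
  also have "\<dots> = 0" unfolding m(2) n(2) k_def using n(1) by simp
  finally have 1: "al * (fst (Xo x) - k * fst (Xo y)) + be * (snd (Xo x) - k * snd (Xo y)) = 0" .
  have "ga * (fst (Xo x) - k * fst (Xo y)) + de * (snd (Xo x) - k * snd (Xo y))
      = (ga * fst (Xo x) + de * snd (Xo x)) - k * (ga * fst (Xo y) + de * snd (Xo y))" by (simp add: algebra_simps)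
  also have "\<dots> = 0" unfolding m(3) n(3) k_def using n(1) by simp
  finally have 2: "ga * (fst (Xo x) - k * fst (Xo y)) + de * (snd (Xo x) - k * snd (Xo y)) = 0" .
  have "fst (Xo x) = k * fst (Xo y)" "snd (Xo x) = k * snd (Xo y)" using lin2[OF 1 2 det] by simp_all
  thus "x = y" by (cases x; cases y) (auto simp: Xo_def)
qed

lemma mob_surj:
  assumes det: "al * de - be * ga \<noteq> (0::'a)"
  shows "surj (mob al be ga de)"
  using finite_UNIV_inj_surj[OF _ mob_inj[OF det]] by simp



lemma span0:
  assumes \<phi>: "lin \<phi>" and z: "\<forall>y. \<phi> (Wv y) = 0" and u: "u \<in> U1 q"
  shows "\<phi> u = 0"
proof -
  define B where "B = Bf \<phi>"
  define C where "C = Cf \<phi>"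
  have Bl: "flin B" unfolding B_def by (rule flin_Bf[OF \<phi>])
  have Cl: "flin C" unfolding C_def by (rule flin_Cf[OF \<phi>])
  have d0: "\<phi> (U1vec q 0 0 0 1) = 0" using z phi_Wv_None[OF \<phi>] by simp
  have e: "\<phi> (U1vec q 1 0 0 0) + B t + C (t^q * t^(q^2)) = 0" for t
    using z phi_Wv_Some[OF \<phi>, of t] d0 by (simp add: B_def C_def)
  have z0: "(0::'a)^q * 0^(q^2) = 0" using q_pos by (simp add: power_0_left)
  have a0: "\<phi> (U1vec q 1 0 0 0) = 0" using e[of 0] z0 flin_0[OF Bl] flin_0[OF Cl] by simp
  have e': "B t + C (t^q * t^(q^2)) = 0" for t using e[of t] a0 by simp
  obtain r where r: "r \<in> FQ" "r \<noteq> 0" "r \<noteq> 1" using r2_ex by blast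
  have rq: "r^q = r" "r^(q^2) = r" using r(1) by (simp_all add: Fq_iff Fq_pow2)
  have Cw: "C (t^q * t^(q^2)) = 0" for t
  proof -
    have p: "(r * t)^q * (r * t)^(q^2) = (r * r) * (t^q * t^(q^2))" by (simp add: power_mult_distrib rq mult_ac)
    have "B (r * t) + C ((r * t)^q * (r * t)^(q^2)) = 0" by (rule e')
    hence "r * B t + (r * r) * C (t^q * t^(q^2)) = 0"
      unfolding p flin_scale[OF Bl r(1)] flin_scale[OF Cl Fq_mult[OF r(1) r(1)]] .
    moreover have "B t = - C (t^q * t^(q^2))" using e'[of t] by (simp add: eq_neg_iff_add_eq_0)
    ultimately have "(r * (r - 1)) * C (t^q * t^(q^2)) = 0" by (simp add: algebra_simps)
    thus ?thesis using r by simp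
  qed
  have Bt: "B t = 0" for t using e'[of t] Cw[of t] by simp
  have Cs: "C s = 0" for s
  proof (cases "s = 0")
    case True thus ?thesis using flin_0[OF Cl] by simp
  next
    case False
    define t where "t = 1 / s"
    have t0: "t \<noteq> 0" using False by (simp add: t_def)
    have "t^q * t^(q^2) = Nm t * s" using False by (simp add: t_def Nm_def field_simps)
    hence "Nm t * C s = 0" using Cw[of t] flin_scale[OF Cl Nm_Fq] by simp
    thus ?thesis using Nm_nz[OF t0] by simp
  qed
  obtain a b c d where abcd: "u = U1vec q a b c d" "a \<in> FQ" "d \<in> FQ" using u unfolding U1_def by blast
  show ?thesis unfolding abcd(1) decomp[OF \<phi> abcd(2,3)]
    using a0 d0 Bt Cs by (simp add: B_def C_def)
qed

lemma count:
  assumes \<psi>: "lin \<psi>" and van: "\<forall>x\<in>PG1q q. \<psi> (Wv x) = 0" and nz: "\<exists>x. \<psi> (Wv x) \<noteq> 0"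
  shows "card {x. \<psi> (Wv x) = 0} \<in> {q^2 + 1, q^2 + q + 1}"
proof -
  define B where "B = Bf \<psi>"
  define C where "C = Cf \<psi>"
  define al where "al = \<psi> (U1vec q 1 0 0 0)"
  have Bl: "flin B" unfolding B_def by (rule flin_Bf[OF \<psi>])
  have Cl: "flin C" unfolding C_def by (rule flin_Cf[OF \<psi>])
  have d0: "\<psi> (U1vec q 0 0 0 1) = 0" using van phi_Wv_None[OF \<psi>] by (simp add: PG1q_def)
  have ws: "\<psi> (Wv (Some t)) = al + B t + C (t^q * t^(q^2))" for t
    using phi_Wv_Some[OF \<psi>, of t] d0 by (simp add: B_def C_def al_def)
  have er: "al + r * B 1 + (r * r) * C 1 = 0" if r: "r \<in> FQ" for r
  proof -
    have "Some r \<in> PG1q q" using r by (simp add: PG1q_def)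
    hence "\<psi> (Wv (Some r)) = 0" using van by blast
    hence "al + B r + C (r^q * r^(q^2)) = 0" using ws by simp
    moreover have "r^q * r^(q^2) = r * r" using r by (simp add: Fq_iff Fq_pow2)
    ultimately show ?thesis using flin_Fq_elem[OF Bl r] flin_Fq_elem[OF Cl Fq_mult[OF r r]] by simp
  qed
  have a0: "al = 0" using er[OF Fq_0] by simp
  have bc: "B 1 + C 1 = 0" using er[OF Fq_1] a0 by simp
  obtain r where r: "r \<in> FQ" "r \<noteq> 0" "r \<noteq> 1" using r2_ex by blast
  have "r * B 1 + (r * r) * C 1 = 0" using er[OF r(1)] a0 by simp
  moreover have "B 1 = - C 1" using bc by (simp add: eq_neg_iff_add_eq_0)
  ultimately have "(r * (r - 1)) * C 1 = 0" by (simp add: algebra_simps)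
  hence C1: "C 1 = 0" using r by simp
  hence B1: "B 1 = 0" using bc by simp
  have ex: "\<exists>t. B t + C (t^q * t^(q^2)) \<noteq> 0"
  proof -
    obtain x where x: "\<psi> (Wv x) \<noteq> 0" using nz by blast
    show ?thesis
    proof (cases x)
      case None thus ?thesis using x d0 phi_Wv_None[OF \<psi>] by simp
    next
      case (Some t) thus ?thesis using x ws a0 by auto
    qed
  qed
  define S where "S = {t. B t + C (t^q * t^(q^2)) = 0}"
  have cS: "card S \<in> {q^2, q^2 + q}" unfolding S_def by (rule core[OF Bl Cl B1 C1 ex])
  have eqS: "{x. \<psi> (Wv x) = 0} = insert None (Some ` S)"
  proof (rule Set.set_eqI)
    fix x show "x \<in> {x. \<psi> (Wv x) = 0} \<longleftrightarrow> x \<in> insert None (Some ` S)"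
      by (cases x) (auto simp: S_def ws a0 d0 phi_Wv_None[OF \<psi>])
  qed
  have "card {x. \<psi> (Wv x) = 0} = card S + 1"
    unfolding eqS by (simp add: card_image)
  thus ?thesis using cS by auto
qed

lemma pt_sub: "fq_subspace q (H :: (nat \<Rightarrow> 'a) set) \<Longrightarrow> pt q v \<subseteq> H \<longleftrightarrow> v \<in> H"
proof
  assume "pt q v \<subseteq> H"
  moreover have "v \<in> pt q v" unfolding pt_def by (rule CollectI, rule exI[of _ 1]) simp
  ultimately show "v \<in> H" by blast
next
  assume "fq_subspace q H" "v \<in> H"
  thus "pt q v \<subseteq> H" unfolding pt_def fq_subspace_def by blast
qed

lemma theta_inj: "inj (theta q :: 'a option \<Rightarrow> _)"
proof (rule injI)
  fix x y :: "'a option"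
  assume e: "theta q x = theta q y"
  have "Wv y \<in> pt q (Wv y)" unfolding pt_def by (rule CollectI, rule exI[of _ 1]) simp
  hence "Wv y \<in> pt q (Wv x)" using e by (simp add: theta_Wv)
  then obtain l where l: "Wv y = (\<lambda>i. l * Wv x i)" unfolding pt_def by blast
  have i0: "Wv y 0 = l * Wv x 0" and i4: "Wv y 4 = l * Wv x 4" and i7: "Wv y 7 = l * Wv x 7"
    using fun_cong[OF l] by simp_all
  show "x = y"
  proof (cases x; cases y)
    fix t s assume "x = Some t" "y = Some s"
    thus "x = y" using i0 i4 by (simp add: Wv_Some U1vec_nth)
  next
    fix t assume "x = Some t" "y = None"
    thus "x = y" using i0 i7 by (simp add: Wv_Some Wv_None U1vec_nth)
  next
    fix s assume "x = None" "y = Some s"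
    thus "x = y" using i0 by (simp add: Wv_Some Wv_None U1vec_nth)
  qed simp
qed

end

theorem mainTheorem6:
  fixes q :: nat and H :: "(nat \<Rightarrow> 'a::{field,finite}) set" and L :: "'a option set"
  assumes "\<exists>p k. prime p \<and> k > 0 \<and> q = p ^ k"
    and "q \<ge> 4"
    and "card (UNIV :: 'a set) = q ^ 3"
    and "hyperplane q H"
    and "subline q L"
    and "\<forall>P \<in> theta q ` L. P \<subseteq> H"
  shows "card {P \<in> O1 q. P \<subseteq> H} \<in> {q^2 + 1, q^2 + q + 1}"
proof -
  interpret F: ffq q "TYPE('a)" by unfold_locales (use assms(1-3) in auto)
  obtain \<phi> where \<phi>: "F.lin \<phi>" and Hiff: "\<forall>u\<in>U1 q. u \<in> H \<longleftrightarrow> \<phi> u = 0"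
    and nz: "\<exists>u\<in>U1 q. \<phi> u \<noteq> 0"
    using F.hyp_fun[OF assms(4)] by blast
  have sub: "fq_subspace q H" using assms(4) unfolding hyperplane_def by blast
  obtain al be ga de where det: "al * de - be * ga \<noteq> (0::'a)" and L: "L = mob al be ga de ` PG1q q"
    using assms(5) unfolding subline_def by blast
  define m where "m = mob al be ga de"
  define \<psi> where "\<psi> u = \<phi> (F.Mv al be ga de u)" for u
  have \<psi>: "F.lin \<psi>"
    unfolding F.lin_def \<psi>_def
  proof (intro conjI ballI)
    show "\<phi> (F.Mv al be ga de u) \<in> Fq q" if u: "u \<in> U1 q" for u :: "nat \<Rightarrow> 'a"
      using F.lin_Fq[OF \<phi> F.Mv_U1[OF u]] .
    show "\<phi> (F.Mv al be ga de (\<lambda>i. u i + w i)) = \<phi> (F.Mv al be ga de u) + \<phi> (F.Mv al be ga de w)"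
      if u: "u \<in> U1 q" and w: "w \<in> U1 q" for u w :: "nat \<Rightarrow> 'a"
      unfolding F.Mv_add using F.lin_add[OF \<phi> F.Mv_U1[OF u] F.Mv_U1[OF w]] .
    show "\<phi> (F.Mv al be ga de (\<lambda>i. l * u i)) = l * \<phi> (F.Mv al be ga de u)"
      if l: "l \<in> Fq q" and u: "u \<in> U1 q" for l :: 'a and u :: "nat \<Rightarrow> 'a"
      unfolding F.Mv_scale using F.lin_scale[OF \<phi> l F.Mv_U1[OF u]] .
  qed
  have key: "\<psi> (F.Wv x) = 0 \<longleftrightarrow> \<phi> (F.Wv (m x)) = 0" for x
  proof -
    obtain \<mu> where mu: "\<mu> \<noteq> 0" "F.Mv al be ga de (F.Wv x) = (\<lambda>j. F.Nm \<mu> * F.Wv (m x) j)"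
      using F.Mv_Wv[OF det] unfolding m_def by blast
    have "\<psi> (F.Wv x) = F.Nm \<mu> * \<phi> (F.Wv (m x))"
      unfolding \<psi>_def mu(2) using F.lin_scale[OF \<phi> F.Nm_Fq F.Wv_U1] .
    thus ?thesis using F.Nm_nz[OF mu(1)] by simp
  qed
  have Wv_H: "F.Wv y \<in> H \<longleftrightarrow> \<phi> (F.Wv y) = 0" for y using Hiff F.Wv_U1 by blast
  have th_H: "theta q y \<subseteq> H \<longleftrightarrow> \<phi> (F.Wv y) = 0" for y
    unfolding F.theta_Wv F.pt_sub[OF sub] Wv_H ..
  have van: "\<forall>x\<in>PG1q q. \<psi> (F.Wv x) = 0"
  proof
    fix x :: "'a option" assume "x \<in> PG1q q"
    hence "theta q (m x) \<in> theta q ` L" unfolding L m_def by blast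
    hence "theta q (m x) \<subseteq> H" using assms(6) by blast
    thus "\<psi> (F.Wv x) = 0" using key th_H by blast
  qed
  have inj_m: "inj m" unfolding m_def by (rule F.mob_inj[OF det])
  have surj_m: "surj m" unfolding m_def by (rule F.mob_surj[OF det])
  have nz\<psi>: "\<exists>x. \<psi> (F.Wv x) \<noteq> 0"
  proof (rule ccontr)
    assume "\<not> ?thesis"
    hence all: "\<forall>x::'a option. \<phi> (F.Wv (m x)) = 0" using key by blast
    have "\<forall>y. \<phi> (F.Wv y) = 0"
    proof
      fix y obtain x where "y = m x" using surj_m by (metis surjD)
      thus "\<phi> (F.Wv y) = 0" using all by simp
    qed
    hence "\<forall>u\<in>U1 q. \<phi> u = 0" using F.span0[OF \<phi>] by blast
    thus False using nz by blast
  qed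
  have cnt: "card {x. \<psi> (F.Wv x) = 0} \<in> {q^2 + 1, q^2 + q + 1}" by (rule F.count[OF \<psi> van nz\<psi>])
  have "{y. theta q y \<subseteq> H} = m ` {x. \<psi> (F.Wv x) = 0}"
  proof (rule Set.set_eqI)
    fix y
    obtain x where x: "y = m x" using surj_m by (metis surjD)
    show "y \<in> {y. theta q y \<subseteq> H} \<longleftrightarrow> y \<in> m ` {x. \<psi> (F.Wv x) = 0}"
      using x key th_H inj_m by (auto simp: inj_eq)
  qed
  hence c1: "card {y. theta q y \<subseteq> H} = card {x. \<psi> (F.Wv x) = 0}"
    using card_image[OF inj_on_subset[OF inj_m]] by simp
  have "{P \<in> O1 q. P \<subseteq> H} = theta q ` {y. theta q y \<subseteq> H}" unfolding O1_def by blast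
  hence "card {P \<in> O1 q. P \<subseteq> H} = card {y. theta q y \<subseteq> H}"
    using card_image[OF inj_on_subset[OF F.theta_inj]] by simp
  thus ?thesis using c1 cnt by simp
qed

end
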